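(* Let $\mathscr{P}$ be a stationary ergodic stochastic process over a finite alphabet $\Sigma$. The set $\overline{Q}^+$ of atomic accumulation causal states of $\mathscr{P}$ is closed under translation: if $\nu\in\overline{Q}^+$ and $\sigma\in\Sigma$ with $\nu(\sigma\Sigma^\omega)>0$, then $\nu_\sigma\in\overline{Q}^+$.
   Context: $\mathcal{M}_\Sigma$ denotes the set of probability measures on $\Sigma^\omega$ with the $\sigma$-field generated by the cylinders $x\Sigma^\omega$, $x\in\Sigma^\star$. For $x=\sigma_1\cdots\sigma_n$, $Pr(x)=Pr(X_1\cdots X_n=\sigma_1\cdots\sigma_n)$; for $Pr(x)>0$, $\mu_x\in\mathcal{M}_\Sigma$ is given by $\mu_x(y\Sigma^\omega)=Pr(xy)/Pr(x)$; causal states are the classes $[x]$ of sequences with $Pr(x)>0$ under $x\sim y\iff\mu_x=\mu_y$, and $\mu_{[x]}=\mu_x$. For $\nu\in\mathcal{M}_\Sigma$, $d\in\mathbb{N}^+$, $\varepsilon>0$: $B_{d,\varepsilon}(\nu)=\{\nu'\in\mathcal{M}_\Sigma:\sum_{x\in\Sigma^d}|\nu'(x\Sigma^\omega)-\nu(x\Sigma^\omega)|<\varepsilon\}$, and $p_{l,d,\varepsilon}(\nu)=\sum\{Pr(x):x\in\Sigma^l,\ Pr(x)>0,\ \mu_{[x]}\in B_{d,\varepsilon}(\nu)\}$. $\nu$ is an accumulation causal state if $p_{d,\varepsilon}(\nu):=\liminf_{l\to\infty}p_{l,d,\varepsilon}(\nu)>0$ for all $d,\varepsilon$; then $p(\nu)=\lim_{d\to\infty}\lim_{\varepsilon\to0}p_{d,\varepsilon}(\nu)$,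 and $\nu$ is atomic if $p(\nu)>0$. $\overline{Q}^+$ is the set of atomic accumulation causal states. For $\nu(\sigma\Sigma^\omega)>0$, the translation $\nu_\sigma\in\mathcal{M}_\Sigma$ is given by $\nu_\sigma(x\Sigma^\omega)=\nu(\sigma x\Sigma^\omega)/\nu(\sigma\Sigma^\omega)$. *)

theory Defs
  imports "HOL-Probability.Probability"
begin

definition SS :: "('a::finite) stream measure" where
  "SS = stream_space (count_space UNIV)"

definition cyl :: "('a::finite) list \<Rightarrow> 'a stream set" where
  "cyl x = {w \<in> space SS. stake (length x) w = x}"

definition MS :: "('a::finite) stream measure set" where
  "MS = {nu. prob_space nu \<and> sets nu = sets SS}"

definition cval :: "('a::finite) stream measure \<Rightarrow> 'a list \<Rightarrow> real" where
  "cval nu x = measure nu (cyl x)"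

text \<open>Conditional shifted measure: y Sigma^omega maps to nu(xy Sigma^omega)/nu(x Sigma^omega).
  For a process P, cshift P x is mu_x; for nu and a letter s, cshift nu [s] is the translation nu_s.\<close>
definition cshift :: "('a::finite) stream measure \<Rightarrow> 'a list \<Rightarrow> 'a stream measure" where
  "cshift nu x = distr (uniform_measure nu (cyl x)) SS (sdrop (length x))"

definition Ball_de :: "nat \<Rightarrow> real \<Rightarrow> ('a::finite) stream measure \<Rightarrow> 'a stream measure set" where
  "Ball_de d eps nu = {nu' \<in> MS.
     (\<Sum>x\<in>{x::'a list. length x = d}. \<bar>cval nu' x - cval nu x\<bar>) < eps}"

definition p_lde :: "('a::finite) stream measure \<Rightarrow> nat \<Rightarrow> nat \<Rightarrow> real \<Rightarrow> 'a stream measure \<Rightarrow> real" where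
  "p_lde P l d eps nu = (\<Sum>x\<in>{x::'a list. length x = l \<and> cval P x > 0 \<and> cshift P x \<in> Ball_de d eps nu}. cval P x)"

definition p_de :: "('a::finite) stream measure \<Rightarrow> nat \<Rightarrow> real \<Rightarrow> 'a stream measure \<Rightarrow> ereal" where
  "p_de P d eps nu = liminf (\<lambda>l. ereal (p_lde P l d eps nu))"

definition accumulation_cs :: "('a::finite) stream measure \<Rightarrow> 'a stream measure \<Rightarrow> bool" where
  "accumulation_cs P nu \<longleftrightarrow> nu \<in> MS \<and> (\<forall>d>0. \<forall>eps>0. p_de P d eps nu > 0)"

definition p_atom :: "('a::finite) stream measure \<Rightarrow> 'a stream measure \<Rightarrow> ereal" where
  "p_atom P nu = Lim sequentially (\<lambda>d. Lim (at_right 0) (\<lambda>eps. p_de P d eps nu))"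

definition Qplus :: "('a::finite) stream measure \<Rightarrow> 'a stream measure set" where
  "Qplus P = {nu. accumulation_cs P nu \<and> p_atom P nu > 0}"

definition stationary :: "('a::finite) stream measure \<Rightarrow> bool" where
  "stationary P \<longleftrightarrow> distr P SS stl = P"

definition ergodic :: "('a::finite) stream measure \<Rightarrow> bool" where
  "ergodic P \<longleftrightarrow> (\<forall>A\<in>sets SS. stl -` A \<inter> space SS = A \<longrightarrow>
      measure P A = 0 \<or> measure P A = 1)"

end

theory Submission
  imports Defs
begin

lemma space_SS[simp]: "space (SS::('a::finite) stream measure) = UNIV"
  by (simp add: SS_def space_stream_space)

lemma cyl_alt: "cyl x = {w. stake (length x) w = x}"
  by (simp add: cyl_def)

lemma cyl_sets[measurable]: "cyl (x::('a::finite) list) \<in> sets SS"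
proof -
  have "cyl x = stake (length x) -` {x} \<inter> space SS" by (auto simp: cyl_def)
  also have "\<dots> \<in> sets SS" unfolding SS_def
    by (rule measurable_sets[OF measurable_stake]) simp
  finally show ?thesis .
qed

lemma MS_D: assumes "mu \<in> MS" shows "prob_space mu" "sets mu = sets SS"
  using assms by (auto simp: MS_def)

lemma cval_nonneg: "cval mu x \<ge> 0" by (simp add: cval_def)

lemma cyl_split: "cyl x = (\<Union>w\<in>{w::'a::finite list. length w = d}. cyl (x @ w))"
proof safe
  fix s assume "s \<in> cyl x"
  then have "stake (length x + d) s = x @ stake d (sdrop (length x) s)"
    using stake_add[of "length x" s d] by (simp add: cyl_alt)
  then show "s \<in> (\<Union>w\<in>{w::'a list. length w = d}. cyl (x @ w))"
    by (auto simp: cyl_alt intro!: bexI[of _ "stake d (sdrop (length x) s)"])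
next
  fix s w assume "s \<in> cyl (x @ w)"
  then have "stake (length x + length w) s = x @ w" by (simp add: cyl_alt)
  then have "take (length x) (stake (length x + length w) s) = x" by simp
  then show "s \<in> cyl x" by (simp add: cyl_alt take_stake)
qed

lemma cval_split:
  assumes "(mu::('a::finite) stream measure) \<in> MS"
  shows "cval mu x = (\<Sum>w\<in>{w::'a list. length w = d}. cval mu (x @ w))"
proof -
  interpret prob_space mu using MS_D[OF assms] by simp
  have "cval mu x = measure mu (\<Union>w\<in>{w::'a list. length w = d}. cyl (x @ w))"
    by (simp add: cval_def cyl_split[of x d])
  also have "\<dots> = (\<Sum>w\<in>{w::'a list. length w = d}. cval mu (x @ w))"
    unfolding cval_def
  proof (rule measure_finite_Union)
    show "finite {w::'a list. length w = d}" using finite_lists_length_eq[of "UNIV::'a set" d] by simp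
    show "(\<lambda>w. cyl (x @ w)) ` {w. length w = d} \<subseteq> sets mu"
      by (simp add: image_subset_iff MS_D(2)[OF assms])
    show "disjoint_family_on (\<lambda>w. cyl (x @ w)) {w. length w = d}"
      by (auto simp: disjoint_family_on_def cyl_alt)
  qed (simp add: emeasure_finite)
  finally show ?thesis .
qed

lemma cshift_props:
  assumes "(mu::('a::finite) stream measure) \<in> MS" "cval mu x > 0"
  shows "cshift mu x \<in> MS" "cval (cshift mu x) y = cval mu (x @ y) / cval mu x"
proof -
  interpret prob_space mu using MS_D[OF assms(1)] by simp
  have sm: "sets mu = sets SS" using MS_D[OF assms(1)] by simp
  have cs: "cyl x \<in> sets mu" using sm by simp
  have e0: "emeasure mu (cyl x) \<noteq> 0" using assms(2) cs
    by (simp add: cval_def emeasure_eq_measure)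
  have e1: "emeasure mu (cyl x) \<noteq> \<infinity>" by (simp add: emeasure_finite)
  have meas: "sdrop (length x) \<in> measurable (uniform_measure mu (cyl x)) SS"
  proof -
    have m0: "sdrop (length x) \<in> measurable SS (SS::'a stream measure)" by (simp add: SS_def)
    then show ?thesis using measurable_cong_sets[of "uniform_measure mu (cyl x)" SS SS SS] sm by simp
  qed
  show "cshift mu x \<in> MS" unfolding MS_def cshift_def
    using prob_space.prob_space_distr[OF prob_space_uniform_measure[OF e0 e1] meas]
    by simp
  have "cval (cshift mu x) y = measure (uniform_measure mu (cyl x)) (sdrop (length x) -` cyl y)"
    unfolding cval_def cshift_def
    by (subst measure_distr[OF meas]) (auto simp: sets_eq_imp_space_eq[OF sm])
  also have "\<dots> = measure mu (cyl x \<inter> (sdrop (length x) -` cyl y)) / measure mu (cyl x)"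
  proof (rule measure_uniform_measure[OF e0 e1])
    have "sdrop (length x) -` cyl y = sdrop (length x) -` cyl y \<inter> space SS" by simp
    also have "\<dots> \<in> sets SS" by (rule measurable_sets[OF _ cyl_sets]) (simp add: SS_def)
    finally show "sdrop (length x) -` cyl y \<in> sets mu" using sm by simp
  qed
  also have "cyl x \<inter> (sdrop (length x) -` cyl y) = cyl (x @ y)"
  proof -
    have "stake (length x + length y) w = stake (length x) w @ stake (length y) (sdrop (length x) w)" for w
      using stake_add[of "length x" w "length y"] by simp
    note e = this
    show ?thesis
    proof (rule set_eqI)
      fix w
      have "(stake (length x) w @ stake (length y) (sdrop (length x) w) = x @ y) \<longleftrightarrow>
          (stake (length x) w = x \<and> stake (length y) (sdrop (length x) w) = y)"
        by (rule append_eq_append_conv) simp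
      moreover have "w \<in> cyl (x @ y) \<longleftrightarrow> stake (length x + length y) w = x @ y"
        unfolding cyl_alt by (simp only: mem_Collect_eq length_append)
      moreover have "w \<in> cyl x \<inter> (sdrop (length x) -` cyl y) \<longleftrightarrow>
          (stake (length x) w = x \<and> stake (length y) (sdrop (length x) w) = y)"
        unfolding cyl_alt by (simp only: mem_Collect_eq Int_iff vimage_eq)
      ultimately show "w \<in> cyl x \<inter> (sdrop (length x) -` cyl y) \<longleftrightarrow> w \<in> cyl (x @ y)"
        by (simp only: e)
    qed
  qed
  finally show "cval (cshift mu x) y = cval mu (x @ y) / cval mu x" by (simp add: cval_def)
qed
lemma finite_len: "finite {w::('a::finite) list. length w = d}"
  using finite_lists_length_eq[of "UNIV::'a set" d] by simp

lemma core:
  fixes a b :: "('a::finite) list \<Rightarrow> real"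
    and d :: nat
  defines "W \<equiv> {w::'a list. length w = d}"
  assumes adda: "a [s] = (\<Sum>w\<in>W. a (s#w))"
    and addb: "b [s] = (\<Sum>w\<in>W. b (s#w))"
    and bnn: "\<And>w. b w \<ge> 0" and bs: "b [s] > 0"
    and A: "(\<Sum>z\<in>{z::'a list. length z = Suc d}. \<bar>a z - b z\<bar>) < eps"
    and epsb: "eps \<le> b [s] / 2"
  shows "a [s] > b [s] / 2"
    "(\<Sum>w\<in>W. \<bar>a (s#w) / a [s] - b (s#w) / b [s]\<bar>) < 4 * eps / b [s]"
proof -
  define S1 where "S1 = (\<Sum>w\<in>W. \<bar>a (s#w) - b (s#w)\<bar>)"
  have fW: "finite W" unfolding W_def by (rule finite_len)
  have "S1 = (\<Sum>z\<in>(Cons s) ` W. \<bar>a z - b z\<bar>)"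
    unfolding S1_def by (subst sum.reindex) (auto simp: inj_on_def)
  also have "\<dots> \<le> (\<Sum>z\<in>{z::'a list. length z = Suc d}. \<bar>a z - b z\<bar>)"
    by (rule sum_mono2) (auto simp: W_def finite_len)
  finally have S1A: "S1 < eps" using A by simp
  have "\<bar>a [s] - b [s]\<bar> = \<bar>\<Sum>w\<in>W. (a (s#w) - b (s#w))\<bar>"
    by (simp add: adda addb sum_subtractf)
  also have "\<dots> \<le> S1" unfolding S1_def by (rule sum_abs)
  finally have dab: "\<bar>a [s] - b [s]\<bar> \<le> S1" .
  show as: "a [s] > b [s] / 2" using dab S1A epsb by linarith
  then have asp: "a [s] > 0" using bs by linarith
  have trm: "\<bar>a (s#w) / a [s] - b (s#w) / b [s]\<bar> \<le>
      \<bar>a (s#w) - b (s#w)\<bar> / a [s] + b (s#w) * (\<bar>a [s] - b [s]\<bar> / (a [s] * b [s]))" for w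
  proof -
    have "a (s#w) / a [s] - b (s#w) / b [s] =
        (a (s#w) - b (s#w)) / a [s] + b (s#w) * ((b [s] - a [s]) / (a [s] * b [s]))"
      using asp bs by (simp add: field_simps)
    also have "\<bar>\<dots>\<bar> \<le> \<bar>(a (s#w) - b (s#w)) / a [s]\<bar> + \<bar>b (s#w) * ((b [s] - a [s]) / (a [s] * b [s]))\<bar>"
      by (rule abs_triangle_ineq)
    also have "\<dots> = \<bar>a (s#w) - b (s#w)\<bar> / a [s] + b (s#w) * (\<bar>a [s] - b [s]\<bar> / (a [s] * b [s]))"
      using asp bs bnn[of "s#w"] by (simp add: abs_mult abs_minus_commute)
    finally show ?thesis .
  qed
  have "(\<Sum>w\<in>W. \<bar>a (s#w) / a [s] - b (s#w) / b [s]\<bar>) \<le>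
      (\<Sum>w\<in>W. \<bar>a (s#w) - b (s#w)\<bar> / a [s] + b (s#w) * (\<bar>a [s] - b [s]\<bar> / (a [s] * b [s])))"
    by (rule sum_mono) (rule trm)
  also have "\<dots> = S1 / a [s] + b [s] * (\<bar>a [s] - b [s]\<bar> / (a [s] * b [s]))"
    by (simp add: S1_def sum.distrib sum_divide_distrib sum_distrib_right addb)
  also have "\<dots> = S1 / a [s] + \<bar>a [s] - b [s]\<bar> / a [s]"
    using bs by simp
  also have "\<dots> \<le> 2 * S1 / a [s]"
    using dab asp by (simp add: divide_right_mono add_divide_distrib[symmetric])
  also have "\<dots> < 2 * eps / a [s]"
    using S1A asp by (simp add: divide_strict_right_mono)
  also have "\<dots> \<le> 4 * eps / b [s]"
  proof -
    have epos: "eps > 0" using S1A dab by linarith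
    have "2 * eps / a [s] \<le> 2 * eps / (b [s] / 2)"
      using as bs epos by (intro divide_left_mono) auto
    then show ?thesis by simp
  qed
  finally show "(\<Sum>w\<in>W. \<bar>a (s#w) / a [s] - b (s#w) / b [s]\<bar>) < 4 * eps / b [s]" .
qed


lemma step:
  fixes P nu :: "('a::finite) stream measure"
  assumes P: "P \<in> MS" and nu: "nu \<in> MS" and bs: "cval nu [s] > 0"
    and epsb: "eps \<le> cval nu [s] / 2" and epse: "4 * eps / cval nu [s] \<le> eps'"
  shows "p_lde P (Suc l) d eps' (cshift nu [s]) \<ge> cval nu [s] / 2 * p_lde P l (Suc d) eps nu"
proof -
  define X where "X = {x::'a list. length x = l \<and> cval P x > 0 \<and> cshift P x \<in> Ball_de (Suc d) eps nu}"
  define Y where "Y = {x::'a list. length x = Suc l \<and> cval P x > 0 \<and> cshift P x \<in> Ball_de d eps' (cshift nu [s])}"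
  have nus: "cshift nu [s] \<in> MS" and nusv: "\<And>w. cval (cshift nu [s]) w = cval nu (s # w) / cval nu [s]"
    using cshift_props[OF nu bs] by auto
  have memb: "x @ [s] \<in> Y \<and> cval P (x @ [s]) \<ge> cval nu [s] / 2 * cval P x" if x: "x \<in> X" for x
  proof -
    have Px: "cval P x > 0" and lx: "length x = l" and B: "cshift P x \<in> Ball_de (Suc d) eps nu"
      using x by (auto simp: X_def)
    define a where "a = cval (cshift P x)"
    have mux: "cshift P x \<in> MS" and av: "\<And>z. a z = cval P (x @ z) / cval P x"
      using cshift_props[OF P Px] by (auto simp: a_def)
    have A: "(\<Sum>z\<in>{z::'a list. length z = Suc d}. \<bar>a z - cval nu z\<bar>) < eps"
      using B by (simp add: Ball_de_def a_def)
    have adda: "a [s] = (\<Sum>w\<in>{w::'a list. length w = d}. a (s#w))"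
      using cval_split[OF mux, of "[s]" d] by (simp add: a_def)
    have addb: "cval nu [s] = (\<Sum>w\<in>{w::'a list. length w = d}. cval nu (s#w))"
      using cval_split[OF nu, of "[s]" d] by simp
    note c = core[of a s d "cval nu", OF adda addb cval_nonneg bs A epsb]
    have Pxs: "cval P (x @ [s]) = a [s] * cval P x" using av[of "[s]"] Px by simp
    have Pxs_pos: "cval P (x @ [s]) > 0" using c(1) bs Px Pxs by simp
    have ge: "cval P (x @ [s]) \<ge> cval nu [s] / 2 * cval P x"
      using c(1) Px Pxs by (simp add: mult_right_mono)
    have mxs: "cshift P (x @ [s]) \<in> MS" using cshift_props[OF P Pxs_pos] by simp
    have mxsv: "cval (cshift P (x @ [s])) w = a (s # w) / a [s]" for w
    proof -
      have "cval (cshift P (x @ [s])) w = cval P (x @ s # w) / cval P (x @ [s])"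
        using cshift_props(2)[OF P Pxs_pos, of w] by simp
      also have "cval P (x @ s # w) = a (s # w) * cval P x" using av[of "s # w"] Px by simp
      finally show ?thesis using Pxs Px by simp
    qed
    have "(\<Sum>w\<in>{w::'a list. length w = d}. \<bar>cval (cshift P (x @ [s])) w - cval (cshift nu [s]) w\<bar>) < eps'"
      using c(2) epse by (simp add: mxsv nusv)
    then have "cshift P (x @ [s]) \<in> Ball_de d eps' (cshift nu [s])"
      using mxs by (simp add: Ball_de_def)
    then show ?thesis using Pxs_pos lx ge by (simp add: Y_def)
  qed
  have fX: "finite X" by (rule finite_subset[OF _ finite_len[of l]]) (auto simp: X_def)
  have fY: "finite Y" by (rule finite_subset[OF _ finite_len[of "Suc l"]]) (auto simp: Y_def)
  have "cval nu [s] / 2 * p_lde P l (Suc d) eps nu = (\<Sum>x\<in>X. cval nu [s] / 2 * cval P x)"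
    by (simp add: p_lde_def X_def sum_distrib_left)
  also have "\<dots> \<le> (\<Sum>x\<in>X. cval P (x @ [s]))"
    by (rule sum_mono) (use memb in blast)
  also have "\<dots> = (\<Sum>z\<in>(\<lambda>x. x @ [s]) ` X. cval P z)"
    by (subst sum.reindex) (auto simp: inj_on_def)
  also have "\<dots> \<le> (\<Sum>z\<in>Y. cval P z)"
    by (rule sum_mono2[OF fY]) (use memb cval_nonneg in auto)
  also have "\<dots> = p_lde P (Suc l) d eps' (cshift nu [s])"
    by (simp add: p_lde_def Y_def)
  finally show ?thesis .
qed


lemma pde_step:
  fixes P nu :: "('a::finite) stream measure"
  assumes P: "P \<in> MS" and nu: "nu \<in> MS" and bs: "cval nu [s] > 0"
    and epsb: "eps \<le> cval nu [s] / 2" and epse: "4 * eps / cval nu [s] \<le> eps'"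
  shows "p_de P d eps' (cshift nu [s]) \<ge> ereal (cval nu [s] / 2) * p_de P (Suc d) eps nu"
proof -
  have "ereal (cval nu [s] / 2) * p_de P (Suc d) eps nu =
      liminf (\<lambda>l. ereal (cval nu [s] / 2) * ereal (p_lde P l (Suc d) eps nu))"
    unfolding p_de_def using bs by (subst Liminf_ereal_mult_left) auto
  also have "\<dots> \<le> liminf (\<lambda>l. ereal (p_lde P (l + 1) d eps' (cshift nu [s])))"
    by (rule Liminf_mono) (use step[OF P nu bs epsb epse] in auto)
  also have "\<dots> = p_de P d eps' (cshift nu [s])"
    unfolding p_de_def by (rule liminf_shift)
  finally show ?thesis .
qed

lemma p_lde_mono:
  assumes "\<And>m. m \<in> Ball_de d e nu \<Longrightarrow> m \<in> Ball_de d' e' nu"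
  shows "p_lde P l d e nu \<le> p_lde P l d' e' nu"
  unfolding p_lde_def
  by (rule sum_mono2) (use assms cval_nonneg in \<open>auto intro: finite_subset[OF _ finite_len[of l]]\<close>)

lemma p_de_mono:
  assumes "\<And>m. m \<in> Ball_de d e nu \<Longrightarrow> m \<in> Ball_de d' e' nu"
  shows "p_de P d e nu \<le> p_de P d' e' nu"
  unfolding p_de_def by (rule Liminf_mono) (use p_lde_mono[OF assms] in auto)

lemma Ball_Suc:
  fixes nu :: "('a::finite) stream measure"
  assumes nu: "nu \<in> MS" and m: "m \<in> Ball_de (Suc d) e nu"
  shows "m \<in> Ball_de d e nu"
proof -
  have mM: "m \<in> MS" using m by (simp add: Ball_de_def)
  define f where "f z = \<bar>cval m z - cval nu z\<bar>" for z :: "'a list"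
  define A where "A = {z::'a list. length z = d}"
  define B where "B = {w::'a list. length w = 1}"
  have "(\<Sum>z\<in>A. f z) \<le> (\<Sum>z\<in>A. \<Sum>w\<in>B. f (z @ w))"
  proof (rule sum_mono)
    fix z
    have "f z = \<bar>\<Sum>w\<in>B. (cval m (z @ w) - cval nu (z @ w))\<bar>"
      unfolding f_def B_def
      by (simp add: cval_split[OF mM, of z 1] cval_split[OF nu, of z 1] sum_subtractf)
    also have "\<dots> \<le> (\<Sum>w\<in>B. f (z @ w))" unfolding f_def by (rule sum_abs)
    finally show "f z \<le> (\<Sum>w\<in>B. f (z @ w))" .
  qed
  also have "\<dots> = (\<Sum>(z, w)\<in>A \<times> B. f (z @ w))"
    by (rule sum.cartesian_product)
  also have "\<dots> = (\<Sum>y\<in>(\<lambda>(z, w). z @ w) ` (A \<times> B). f y)"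
    by (subst sum.reindex) (auto simp: inj_on_def A_def B_def split_def)
  also have "(\<lambda>(z, w). z @ w) ` (A \<times> B) = {y::'a list. length y = Suc d}"
  proof safe
    fix y :: "'a list" assume "length y = Suc d"
    then show "y \<in> (\<lambda>(z, w). z @ w) ` (A \<times> B)"
      by (intro image_eqI[of _ _ "(take d y, drop d y)"]) (auto simp: A_def B_def)
  qed (auto simp: A_def B_def)
  finally have "(\<Sum>z\<in>A. f z) \<le> (\<Sum>y\<in>{y::'a list. length y = Suc d}. f y)" .
  then show ?thesis using m mM by (auto simp: Ball_de_def A_def f_def)
qed

lemma lim_right_mono:
  fixes f :: "real \<Rightarrow> ereal"
  assumes mono: "\<And>e e'. 0 < e \<Longrightarrow> e \<le> e' \<Longrightarrow> f e \<le> f e'"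
  shows "Lim (at_right 0) f = (INF e\<in>{0<..}. f e)"
proof (rule tendsto_Lim)
  show "\<not> trivial_limit (at_right (0::real))" by simp
  show "(f \<longlongrightarrow> (INF e\<in>{0<..}. f e)) (at_right 0)"
  proof (rule decreasing_tendsto)
    show "\<forall>\<^sub>F n in at_right 0. (INF e\<in>{0<..}. f e) \<le> f n"
      by (rule eventually_mono[OF eventually_at_right_less]) (auto intro: INF_lower)
    fix x assume "(INF e\<in>{0<..}. f e) < x"
    then obtain e0 where e0: "e0 > 0" "f e0 < x" by (auto simp: INF_less_iff)
    show "\<forall>\<^sub>F n in at_right 0. f n < x"
      unfolding eventually_at_right_field
      using e0 mono by (intro exI[of _ e0]) (meson le_less_trans less_imp_le)
  qed
qed

lemma p_atom_eq:
  fixes nu :: "('a::finite) stream measure"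
  assumes nu: "nu \<in> MS"
  shows "p_atom P nu = (INF d. INF e\<in>{0<..}. p_de P d e nu)"
proof -
  have inner: "Lim (at_right 0) (\<lambda>eps. p_de P d eps nu) = (INF e\<in>{0<..}. p_de P d e nu)" for d
    by (rule lim_right_mono) (rule p_de_mono, auto simp: Ball_de_def)
  have dec: "decseq (\<lambda>d. INF e\<in>{0<..}. p_de P d e nu)"
  proof (rule decseq_SucI)
    fix d
    show "(INF e\<in>{0<..}. p_de P (Suc d) e nu) \<le> (INF e\<in>{0<..}. p_de P d e nu)"
      by (rule INF_mono) (use p_de_mono[OF Ball_Suc[OF nu]] in blast)
  qed
  show ?thesis unfolding p_atom_def inner
    by (rule tendsto_Lim) (auto intro: LIMSEQ_INF[OF dec])
qed


theorem mainTheorem4: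
  fixes P nu :: "('a::finite) stream measure" and s :: 'a
  assumes "P \<in> MS" and "stationary P" and "ergodic P"
    and "nu \<in> Qplus P" and "cval nu [s] > 0"
  shows "cshift nu [s] \<in> Qplus P"
proof -
  have P: "P \<in> MS" by fact
  have nu: "nu \<in> MS" and acc: "\<And>d e. d > 0 \<Longrightarrow> e > 0 \<Longrightarrow> p_de P d e nu > 0"
    and pa: "p_atom P nu > 0"
    using assms(4) by (auto simp: Qplus_def accumulation_cs_def)
  define b where "b = cval nu [s]"
  have bs: "b > 0" using assms(5) by (simp add: b_def)
  have nus: "cshift nu [s] \<in> MS" using cshift_props[OF nu assms(5)] by simp
  have key: "p_de P d e' (cshift nu [s]) \<ge> ereal (b / 2) * p_de P (Suc d) (min (b/2) (e' * b / 4)) nu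
      \<and> min (b/2) (e' * b / 4) > 0" if e': "e' > 0" for d e'
  proof
    let ?e = "min (b/2) (e' * b / 4)"
    have "4 * ?e / b \<le> 4 * (e' * b / 4) / b" using bs by (intro divide_right_mono) auto
    also have "\<dots> = e'" using bs by simp
    finally have "4 * ?e / cval nu [s] \<le> e'" by (simp add: b_def)
    moreover have "?e \<le> cval nu [s] / 2" by (simp add: b_def)
    ultimately show "p_de P d e' (cshift nu [s]) \<ge> ereal (b / 2) * p_de P (Suc d) ?e nu"
      using pde_step[OF P nu assms(5)] by (simp add: b_def)
    show "?e > 0" using bs e' by simp
  qed
  have accs: "accumulation_cs P (cshift nu [s])"
    unfolding accumulation_cs_def
  proof (intro conjI nus allI impI)
    fix d :: nat and e' :: real assume "d > 0" "e' > 0"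
    then have k: "p_de P d e' (cshift nu [s]) \<ge> ereal (b / 2) * p_de P (Suc d) (min (b/2) (e' * b / 4)) nu"
      and ep: "min (b/2) (e' * b / 4) > 0" using key by auto
    have "p_de P (Suc d) (min (b/2) (e' * b / 4)) nu > 0" using acc ep by simp
    then have "ereal (b / 2) * p_de P (Suc d) (min (b/2) (e' * b / 4)) nu > 0"
      using bs by (simp add: ereal_zero_less_0_iff)
    then show "p_de P d e' (cshift nu [s]) > 0" using k by order
  qed
  have "ereal (b / 2) * p_atom P nu \<le> p_atom P (cshift nu [s])"
    unfolding p_atom_eq[OF nus]
  proof (intro INF_greatest)
    fix d :: nat and e' :: real assume "e' \<in> {0<..}"
    then have k: "p_de P d e' (cshift nu [s]) \<ge> ereal (b / 2) * p_de P (Suc d) (min (b/2) (e' * b / 4)) nu"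
      and ep: "min (b/2) (e' * b / 4) > 0" using key by auto
    have "p_atom P nu \<le> p_de P (Suc d) (min (b/2) (e' * b / 4)) nu"
      unfolding p_atom_eq[OF nu] using ep by (intro INF_lower2[of "Suc d"] INF_lower) auto
    then have "ereal (b / 2) * p_atom P nu \<le> ereal (b / 2) * p_de P (Suc d) (min (b/2) (e' * b / 4)) nu"
      using bs by (intro ereal_mult_left_mono) auto
    then show "ereal (b / 2) * p_atom P nu \<le> p_de P d e' (cshift nu [s])" using k by order
  qed
  moreover have "ereal (b / 2) * p_atom P nu > 0" using bs pa by (simp add: ereal_zero_less_0_iff)
  ultimately have "p_atom P (cshift nu [s]) > 0" by order
  then show ?thesis using accs by (simp add: Qplus_def)
qed

end
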